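(* (i) A $\mathbb{B}$-topological space $(X,\tau)$ is normal if and only if both topological spaces $(X,\tau[tt])$ and $(X,\tau[ff])$ are normal. (ii) $(X,\tau)$ is $T_4$ if and only if the topological space $(X,\tau[tt]\vee\tau[ff])$ is $T_0$, both $(X,\tau[tt])$ and $(X,\tau[ff])$ are $R_0$, and both $(X,\tau[tt])$ and $(X,\tau[ff])$ are normal.
   Context: $\mathbb{B}=\{0,1,tt,ff\}$ is the four-element Boolean algebra with bottom $0$, top $1$, and $tt,ff$ incomparable complements; $\neg$ its complement, $a\to b=\neg a\vee b$. A $\mathbb{B}$-topology on $X$ is $\tau\subseteq\mathbb{B}^X$ containing all constant maps and closed under arbitrary pointwise joins and finite pointwise meets; $\mu$ is closed if $\neg\mu\in\tau$; $\overline{\nu}$ is the meet of all closed sets $\ge\nu$. $\tau[b]=\{\lambda[b]:\lambda\in\tau\}$, $\lambda[b]=\{x:\lambda(x)\ge b\}$; $\tau[tt]\vee\tau[ff]$ is the topology generated by their union. $(X,\tau)$ is normal if for every open $\lambda$ and closed $\mu$ with $\mu\le\lambda$ there is an open $\nu$ with $\mu\le\nu\le\overline{\nu}\le\lambda$. Specialization $\mathbb{B}$-order: $\Omega(\tau)(x,y)=\bigwedge_{\lambda\in\tau}(\lambda(x)\to\lambda(y))$; $(X,\tau)$ is $R_0$ if $\Omega(\tau)$ is symmetric, $T_0$ if $\Omega(\tau)(x,y)=1=\Omega(\tau)(y,x)$ implies $x=y$, $T_1$ if $T_0$ and $R_0$, and $T_4$ if $T_1$ and normal. A topological space is normal if disjoint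 closed sets have disjoint open neighbourhoods (no separation assumption on points); it is $R_0$ if every open set containing a point contains the closure of that point's singleton. *)

theory Defs
  imports "HOL-Analysis.Analysis" "HOL-Library.Product_Order"
begin

text \<open>The four-element Boolean algebra is modelled as bool \<times> bool with the
componentwise (product) order: 0 = (False,False), 1 = (True,True),
tt = (True,False), ff = (False,True).\<close>

type_synonym B4 = "bool \<times> bool"

definition tt :: B4 where "tt = (True, False)"
definition ff :: B4 where "ff = (False, True)"

definition bimp :: "B4 \<Rightarrow> B4 \<Rightarrow> B4" where "bimp a b = sup (- a) b"

text \<open>B-topology on the carrier UNIV of type 'a (maps X \<Rightarrow> B, ordered pointwise).\<close>
definition B_topology :: "('a \<Rightarrow> B4) set \<Rightarrow> bool" where
  "B_topology \<tau> \<longleftrightarrow>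
     (\<forall>c. (\<lambda>_. c) \<in> \<tau>) \<and>
     (\<forall>S. S \<subseteq> \<tau> \<longrightarrow> Sup S \<in> \<tau>) \<and>
     (\<forall>l m. l \<in> \<tau> \<longrightarrow> m \<in> \<tau> \<longrightarrow> inf l m \<in> \<tau>)"

definition B_closed :: "('a \<Rightarrow> B4) set \<Rightarrow> ('a \<Rightarrow> B4) \<Rightarrow> bool" where
  "B_closed \<tau> \<mu> \<longleftrightarrow> - \<mu> \<in> \<tau>"

definition B_closure :: "('a \<Rightarrow> B4) set \<Rightarrow> ('a \<Rightarrow> B4) \<Rightarrow> ('a \<Rightarrow> B4)" where
  "B_closure \<tau> \<nu> = Inf {\<mu>. B_closed \<tau> \<mu> \<and> \<nu> \<le> \<mu>}"

definition B_normal :: "('a \<Rightarrow> B4) set \<Rightarrow> bool" where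
  "B_normal \<tau> \<longleftrightarrow>
     (\<forall>l m. l \<in> \<tau> \<longrightarrow> B_closed \<tau> m \<longrightarrow> m \<le> l \<longrightarrow>
        (\<exists>n \<in> \<tau>. m \<le> n \<and> n \<le> B_closure \<tau> n \<and> B_closure \<tau> n \<le> l))"

definition level :: "('a \<Rightarrow> B4) \<Rightarrow> B4 \<Rightarrow> 'a set" where
  "level l b = {x. b \<le> l x}"

definition levels :: "('a \<Rightarrow> B4) set \<Rightarrow> B4 \<Rightarrow> 'a set set" where
  "levels \<tau> b = (\<lambda>l. level l b) ` \<tau>"

definition level_top :: "('a \<Rightarrow> B4) set \<Rightarrow> B4 \<Rightarrow> 'a topology" where
  "level_top \<tau> b = topology (\<lambda>U. U \<in> levels \<tau> b)"

definition join_top :: "('a \<Rightarrow> B4) set \<Rightarrow> 'a topology" where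
  "join_top \<tau> = topology_generated_by (levels \<tau> tt \<union> levels \<tau> ff)"

definition spec_order :: "('a \<Rightarrow> B4) set \<Rightarrow> 'a \<Rightarrow> 'a \<Rightarrow> B4" where
  "spec_order \<tau> x y = (INF l\<in>\<tau>. bimp (l x) (l y))"

definition B_R0 :: "('a \<Rightarrow> B4) set \<Rightarrow> bool" where
  "B_R0 \<tau> \<longleftrightarrow> (\<forall>x y. spec_order \<tau> x y = spec_order \<tau> y x)"

definition B_T0 :: "('a \<Rightarrow> B4) set \<Rightarrow> bool" where
  "B_T0 \<tau> \<longleftrightarrow> (\<forall>x y. spec_order \<tau> x y = top \<and> spec_order \<tau> y x = top \<longrightarrow> x = y)"

definition B_T1 :: "('a \<Rightarrow> B4) set \<Rightarrow> bool" where
  "B_T1 \<tau> \<longleftrightarrow> B_T0 \<tau> \<and> B_R0 \<tau>"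

definition B_T4 :: "('a \<Rightarrow> B4) set \<Rightarrow> bool" where
  "B_T4 \<tau> \<longleftrightarrow> B_T1 \<tau> \<and> B_normal \<tau>"

definition r0_space :: "'a topology \<Rightarrow> bool" where
  "r0_space T \<longleftrightarrow>
     (\<forall>U x. openin T U \<longrightarrow> x \<in> U \<longrightarrow> T closure_of {x} \<subseteq> U)"

end

theory Submission
  imports Defs
begin

definition bt :: "bool \<Rightarrow> B4" where "bt i = (if i then tt else ff)"
definition cc :: "bool \<Rightarrow> B4 \<Rightarrow> bool" where "cc i = (if i then fst else snd)"

lemma cc_simps[simp]:
  "cc i (inf a b) = (cc i a \<and> cc i b)"
  "cc i (sup a b) = (cc i a \<or> cc i b)"
  "cc i (- a) = (\<not> cc i a)"
  "cc i (Sup A) = (\<exists>a\<in>A. cc i a)"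
  "cc i (Inf A) = (\<forall>a\<in>A. cc i a)"
  "cc i (p, q) = (if i then p else q)"
  "cc i top" "\<not> cc i bot"
  by (cases i; auto simp: cc_def fst_Sup snd_Sup fst_Inf snd_Inf)+

lemma cc_tt[simp]: "cc i tt = i" and cc_ff[simp]: "cc i ff = (\<not> i)"
  by (auto simp: cc_def tt_def ff_def)

lemma prod_eq_cc: "(a::B4) = b \<longleftrightarrow> (\<forall>i. cc i a = cc i b)"
  by (cases a; cases b) (auto simp: cc_def)

lemma prod_le_cc: "(a::B4) \<le> b \<longleftrightarrow> (\<forall>i. cc i a \<longrightarrow> cc i b)"
  by (cases a; cases b) (auto simp: cc_def le_bool_def)

lemma level_bt: "level l (bt i) = {x. cc i (l x)}"
  by (cases i) (auto simp: level_def bt_def tt_def ff_def cc_def less_eq_prod_def)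

lemma bt_simps[simp]: "bt True = tt" "bt False = ff" by (auto simp: bt_def)

lemma levels_bt: "U \<in> levels \<tau> (bt i) \<longleftrightarrow> (\<exists>l\<in>\<tau>. U = {x. cc i (l x)})"
  by (auto simp: levels_def level_bt)

lemma const_in: "B_topology \<tau> \<Longrightarrow> (\<lambda>_. c) \<in> \<tau>"
  unfolding B_topology_def by (cases c) simp

lemma inf_in: "B_topology \<tau> \<Longrightarrow> a \<in> \<tau> \<Longrightarrow> b \<in> \<tau> \<Longrightarrow> inf a b \<in> \<tau>"
  unfolding B_topology_def by simp

lemma Sup_in: "B_topology \<tau> \<Longrightarrow> S \<subseteq> \<tau> \<Longrightarrow> Sup S \<in> \<tau>"
  unfolding B_topology_def by simp

lemma sup_in: "B_topology \<tau> \<Longrightarrow> a \<in> \<tau> \<Longrightarrow> b \<in> \<tau> \<Longrightarrow> sup a b \<in> \<tau>"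
  using Sup_in[of \<tau> "{a,b}"] by simp

lemma mem_tau: assumes "B_topology \<tau>"
  shows "l \<in> \<tau> \<longleftrightarrow> (\<forall>i. {x. cc i (l x)} \<in> levels \<tau> (bt i))"
proof
  assume "l \<in> \<tau>" thus "\<forall>i. {x. cc i (l x)} \<in> levels \<tau> (bt i)" by (auto simp: levels_bt)
next
  assume a: "\<forall>i. {x. cc i (l x)} \<in> levels \<tau> (bt i)"
  obtain l1 where l1: "l1 \<in> \<tau>" "{x. cc True (l x)} = {x. cc True (l1 x)}" using a levels_bt by metis
  obtain l2 where l2: "l2 \<in> \<tau>" "{x. cc False (l x)} = {x. cc False (l2 x)}" using a levels_bt by metis
  have e: "l = sup (inf l1 (\<lambda>_. tt)) (inf l2 (\<lambda>_. ff))"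
  proof
    fix x show "l x = sup (inf l1 (\<lambda>_. tt)) (inf l2 (\<lambda>_. ff)) x"
      unfolding prod_eq_cc
    proof
      fix i show "cc i (l x) = cc i (sup (inf l1 (\<lambda>_. tt)) (inf l2 (\<lambda>_. ff)) x)"
        using l1(2) l2(2) by (cases i) (auto simp: set_eq_iff)
    qed
  qed
  show "l \<in> \<tau>" unfolding e using assms l1 l2
    by (intro sup_in inf_in const_in)
qed

lemma istop: assumes "B_topology \<tau>" shows "istopology (\<lambda>U. U \<in> levels \<tau> (bt i))"
  unfolding istopology_def
proof safe
  fix S T assume "S \<in> levels \<tau> (bt i)" "T \<in> levels \<tau> (bt i)"
  then obtain l m where "l \<in> \<tau>" "m \<in> \<tau>" "S = {x. cc i (l x)}" "T = {x. cc i (m x)}"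
    by (auto simp: levels_bt)
  moreover have "inf l m \<in> \<tau>" using assms calculation by (simp add: inf_in)
  ultimately show "S \<inter> T \<in> levels \<tau> (bt i)" unfolding levels_bt by (intro bexI[of _ "inf l m"]) auto
next
  fix K assume K: "\<forall>k\<in>K. k \<in> levels \<tau> (bt i)"
  define S where "S = {l\<in>\<tau>. {x. cc i (l x)} \<in> K}"
  have "Sup S \<in> \<tau>" using assms by (intro Sup_in) (auto simp: S_def)
  moreover have "\<Union>K = {x. cc i (Sup S x)}"
  proof
    show "\<Union>K \<subseteq> {x. cc i (Sup S x)}"
    proof
      fix x assume "x \<in> \<Union>K"
      then obtain k where k: "k \<in> K" "x \<in> k" by blast
      then obtain l where "l \<in> \<tau>" "k = {x. cc i (l x)}" using K levels_bt by metis
      thus "x \<in> {x. cc i (Sup S x)}" using k by (auto simp: S_def)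
    qed
    show "{x. cc i (Sup S x)} \<subseteq> \<Union>K" by (auto simp: S_def)
  qed
  ultimately show "\<Union>K \<in> levels \<tau> (bt i)" unfolding levels_bt by blast
qed

lemma openin_lt: assumes "B_topology \<tau>"
  shows "openin (level_top \<tau> (bt i)) U \<longleftrightarrow> U \<in> levels \<tau> (bt i)"
  unfolding level_top_def using istop[OF assms] by simp

lemma UNIV_levels: assumes "B_topology \<tau>" shows "UNIV \<in> levels \<tau> b"
  using const_in[OF assms, of top] by (auto simp: levels_def level_def intro!: image_eqI[of _ _ "\<lambda>_. top"])

lemma topspace_lt: assumes "B_topology \<tau>" shows "topspace (level_top \<tau> (bt i)) = UNIV"
  using openin_lt[OF assms] UNIV_levels[OF assms] by (metis openin_subset subset_antisym top_greatest topspace_def Union_upper mem_Collect_eq)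


definition mk :: "(bool \<Rightarrow> 'a set) \<Rightarrow> 'a \<Rightarrow> B4" where
  "mk F = (\<lambda>y. (y \<in> F True, y \<in> F False))"

lemma cc_mk[simp]: "cc i (mk F y) = (y \<in> F i)"
  by (simp add: mk_def)

lemma mk_in: assumes "B_topology \<tau>" "\<And>i. F i \<in> levels \<tau> (bt i)" shows "mk F \<in> \<tau>"
  using assms by (subst mem_tau[OF assms(1)]) simp

lemma fun_le_cc: "(f::'a \<Rightarrow> B4) \<le> g \<longleftrightarrow> (\<forall>i x. cc i (f x) \<longrightarrow> cc i (g x))"
  by (auto simp: le_fun_def prod_le_cc)

lemma closed_char: assumes "B_topology \<tau>"
  shows "B_closed \<tau> m \<longleftrightarrow> (\<forall>i. closedin (level_top \<tau> (bt i)) {x. cc i (m x)})"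
proof -
  have "B_closed \<tau> m \<longleftrightarrow> (\<forall>i. {x. cc i ((- m) x)} \<in> levels \<tau> (bt i))"
    unfolding B_closed_def using mem_tau[OF assms] by blast
  also have "\<dots> \<longleftrightarrow> (\<forall>i. closedin (level_top \<tau> (bt i)) {x. cc i (m x)})"
  proof -
    have "\<And>i. {x. cc i ((- m) x)} = UNIV - {x. cc i (m x)}" by auto
    thus ?thesis by (simp add: closedin_def topspace_lt[OF assms] openin_lt[OF assms])
  qed
  finally show ?thesis .
qed

lemma closure_char: assumes "B_topology \<tau>"
  shows "cc i (B_closure \<tau> n x) \<longleftrightarrow> x \<in> level_top \<tau> (bt i) closure_of {x. cc i (n x)}"
proof -
  let ?T = "level_top \<tau> (bt i)"
  let ?N = "{x. cc i (n x)}"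
  let ?M = "{\<mu>. B_closed \<tau> \<mu> \<and> n \<le> \<mu>}"
  have e: "cc i (B_closure \<tau> n x) \<longleftrightarrow> (\<forall>\<mu>\<in>?M. cc i (\<mu> x))"
    unfolding B_closure_def by (simp add: image_iff)
  show ?thesis
  proof
    assume a: "cc i (B_closure \<tau> n x)"
    define \<mu> where "\<mu> = mk (\<lambda>j. if j = i then ?T closure_of ?N else UNIV)"
    have "\<mu> \<in> ?M"
      unfolding closed_char[OF assms] \<mu>_def fun_le_cc mem_Collect_eq
      using closure_of_subset[of ?N ?T] topspace_lt[OF assms] closedin_topspace by (auto, metis)
    with a e show "x \<in> ?T closure_of ?N" unfolding \<mu>_def by force
  next
    assume x: "x \<in> ?T closure_of ?N"
    have "cc i (\<mu> x)" if "\<mu> \<in> ?M" for \<mu>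
    proof -
      have "closedin ?T {x. cc i (\<mu> x)}" using that closed_char[OF assms] by blast
      moreover have "?N \<subseteq> {x. cc i (\<mu> x)}" using that by (auto simp: fun_le_cc)
      ultimately show ?thesis using closure_of_minimal x by blast
    qed
    thus "cc i (B_closure \<tau> n x)" using e by blast
  qed
qed


lemma B_closure_le: assumes "B_topology \<tau>"
  shows "B_closure \<tau> n \<le> l \<longleftrightarrow> (\<forall>i. level_top \<tau> (bt i) closure_of {x. cc i (n x)} \<subseteq> {x. cc i (l x)})"
  unfolding fun_le_cc closure_char[OF assms] by auto

lemma normal_char: assumes "B_topology \<tau>"
  shows "B_normal \<tau> \<longleftrightarrow> (\<forall>i. normal_space (level_top \<tau> (bt i)))"
proof
  assume N: "B_normal \<tau>"
  show "\<forall>i. normal_space (level_top \<tau> (bt i))"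
  proof (intro allI, unfold normal_space_alt, intro allI impI, elim conjE)
    fix i S U assume S: "closedin (level_top \<tau> (bt i)) S" and U: "openin (level_top \<tau> (bt i)) U"
      and SU: "S \<subseteq> U"
    define l where "l = mk (\<lambda>j. if j = i then U else UNIV)"
    define m where "m = mk (\<lambda>j. if j = i then S else {})"
    have l: "l \<in> \<tau>" unfolding l_def
      using U UNIV_levels[OF assms] openin_lt[OF assms] by (intro mk_in[OF assms]) auto
    have m: "B_closed \<tau> m" unfolding m_def closed_char[OF assms] using S by auto
    have ml: "m \<le> l" unfolding m_def l_def fun_le_cc using SU by auto
    obtain n where n: "n \<in> \<tau>" "m \<le> n" "B_closure \<tau> n \<le> l"
      using N l m ml unfolding B_normal_def by (meson order.trans)
    show "\<exists>V. openin (level_top \<tau> (bt i)) V \<and> S \<subseteq> V \<and> level_top \<tau> (bt i) closure_of V \<subseteq> U"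
    proof (intro exI conjI)
      show "openin (level_top \<tau> (bt i)) {x. cc i (n x)}"
        using n(1) mem_tau[OF assms] openin_lt[OF assms] by blast
      show "S \<subseteq> {x. cc i (n x)}" using n(2) unfolding m_def fun_le_cc by auto
      show "level_top \<tau> (bt i) closure_of {x. cc i (n x)} \<subseteq> U"
      proof -
        have "level_top \<tau> (bt i) closure_of {x. cc i (n x)} \<subseteq> {x. cc i (l x)}"
          using n(3) unfolding B_closure_le[OF assms] by blast
        moreover have "{x. cc i (l x)} = U" unfolding l_def by simp
        ultimately show ?thesis by simp
      qed
    qed
  qed
next
  assume N: "\<forall>i. normal_space (level_top \<tau> (bt i))"
  show "B_normal \<tau>" unfolding B_normal_def
  proof (intro allI impI)
    fix l m assume l: "l \<in> \<tau>" and m: "B_closed \<tau> m" and ml: "m \<le> l"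
    have "\<forall>i. \<exists>V. openin (level_top \<tau> (bt i)) V \<and> {x. cc i (m x)} \<subseteq> V \<and>
             level_top \<tau> (bt i) closure_of V \<subseteq> {x. cc i (l x)}"
    proof
      fix i
      have "closedin (level_top \<tau> (bt i)) {x. cc i (m x)}" using m unfolding closed_char[OF assms] by simp
      moreover have "openin (level_top \<tau> (bt i)) {x. cc i (l x)}"
        using l unfolding mem_tau[OF assms] openin_lt[OF assms] by simp
      moreover have "{x. cc i (m x)} \<subseteq> {x. cc i (l x)}" using ml unfolding fun_le_cc by auto
      ultimately show "\<exists>V. openin (level_top \<tau> (bt i)) V \<and> {x. cc i (m x)} \<subseteq> V \<and>
             level_top \<tau> (bt i) closure_of V \<subseteq> {x. cc i (l x)}"
        using N[rule_format, of i, unfolded normal_space_alt, rule_format] by simp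
    qed
    from choice[OF this] obtain V where V0: "\<forall>i. openin (level_top \<tau> (bt i)) (V i) \<and> {x. cc i (m x)} \<subseteq> V i \<and>
             level_top \<tau> (bt i) closure_of (V i) \<subseteq> {x. cc i (l x)}" by blast
    have V: "\<And>i. openin (level_top \<tau> (bt i)) (V i)" "\<And>i. {x. cc i (m x)} \<subseteq> V i"
      "\<And>i. level_top \<tau> (bt i) closure_of (V i) \<subseteq> {x. cc i (l x)}" using V0 by auto
    have cV: "\<And>i. {x. cc i (mk V x)} = V i" by simp
    show "\<exists>n\<in>\<tau>. m \<le> n \<and> n \<le> B_closure \<tau> n \<and> B_closure \<tau> n \<le> l"
    proof (intro bexI conjI)
      show "mk V \<in> \<tau>" using V(1) openin_lt[OF assms] by (intro mk_in[OF assms]) auto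
      show "m \<le> mk V" using V(2) unfolding fun_le_cc by auto
      show "mk V \<le> B_closure \<tau> (mk V)" unfolding fun_le_cc closure_char[OF assms] cV
        using closure_of_subset[of "V _" "level_top \<tau> (bt _)"] topspace_lt[OF assms] by auto
      show "B_closure \<tau> (mk V) \<le> l" unfolding B_closure_le[OF assms] cV using V(3) by blast
    qed
  qed
qed


definition sp :: "('a \<Rightarrow> B4) set \<Rightarrow> bool \<Rightarrow> 'a \<Rightarrow> 'a \<Rightarrow> bool" where
  "sp \<tau> i x y = (\<forall>U\<in>levels \<tau> (bt i). x \<in> U \<longrightarrow> y \<in> U)"

lemma spec_char: "cc i (spec_order \<tau> x y) = sp \<tau> i x y"
proof -
  have "cc i (spec_order \<tau> x y) = (\<forall>l\<in>\<tau>. cc i (l x) \<longrightarrow> cc i (l y))"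
    unfolding spec_order_def bimp_def by simp
  also have "\<dots> = sp \<tau> i x y"
  proof
    assume a: "\<forall>l\<in>\<tau>. cc i (l x) \<longrightarrow> cc i (l y)"
    show "sp \<tau> i x y" unfolding sp_def
    proof (intro ballI impI)
      fix U assume "U \<in> levels \<tau> (bt i)" "x \<in> U"
      then obtain l where "l \<in> \<tau>" "U = {z. cc i (l z)}" unfolding levels_bt by blast
      thus "y \<in> U" using a \<open>x \<in> U\<close> by auto
    qed
  next
    assume a: "sp \<tau> i x y"
    show "\<forall>l\<in>\<tau>. cc i (l x) \<longrightarrow> cc i (l y)"
    proof (intro ballI impI)
      fix l assume "l \<in> \<tau>" "cc i (l x)"
      have m: "{z. cc i (l z)} \<in> levels \<tau> (bt i)" using \<open>l \<in> \<tau>\<close> unfolding levels_bt by blast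
      have "x \<in> {z. cc i (l z)}" using \<open>cc i (l x)\<close> by simp
      from a[unfolded sp_def, rule_format, OF m this] show "cc i (l y)" by simp
    qed
  qed
  finally show ?thesis .
qed

lemma R0_char: assumes "B_topology \<tau>"
  shows "r0_space (level_top \<tau> (bt i)) \<longleftrightarrow> (\<forall>x y. sp \<tau> i x y \<longrightarrow> sp \<tau> i y x)"
proof -
  let ?L = "levels \<tau> (bt i)"
  have cl: "y \<in> level_top \<tau> (bt i) closure_of {x} \<longleftrightarrow> sp \<tau> i y x" for x y
    unfolding in_closure_of topspace_lt[OF assms] openin_lt[OF assms] sp_def by blast
  show ?thesis
  proof
    assume r: "r0_space (level_top \<tau> (bt i))"
    show "\<forall>x y. sp \<tau> i x y \<longrightarrow> sp \<tau> i y x"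
    proof (intro allI impI)
      fix x y assume s: "sp \<tau> i x y"
      show "sp \<tau> i y x" unfolding sp_def
      proof (intro ballI impI)
        fix U assume U: "U \<in> ?L" "y \<in> U"
        have "level_top \<tau> (bt i) closure_of {y} \<subseteq> U"
          using r U unfolding r0_space_def openin_lt[OF assms] by blast
        thus "x \<in> U" using cl s by blast
      qed
    qed
  next
    assume s: "\<forall>x y. sp \<tau> i x y \<longrightarrow> sp \<tau> i y x"
    show "r0_space (level_top \<tau> (bt i))" unfolding r0_space_def openin_lt[OF assms]
    proof (intro allI impI subsetI)
      fix U x y assume U: "U \<in> ?L" "x \<in> U" and y: "y \<in> level_top \<tau> (bt i) closure_of {x}"
      have "sp \<tau> i x y" using s cl y by blast
      thus "y \<in> U" using U unfolding sp_def by blast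
    qed
  qed
qed

lemma BR0_char: "B_R0 \<tau> \<longleftrightarrow> (\<forall>i x y. sp \<tau> i x y \<longrightarrow> sp \<tau> i y x)"
  unfolding B_R0_def prod_eq_cc spec_char by blast

lemma BT0_char: "B_T0 \<tau> \<longleftrightarrow> (\<forall>x y. (\<forall>i. sp \<tau> i x y \<and> sp \<tau> i y x) \<longrightarrow> x = y)"
  unfolding B_T0_def prod_eq_cc spec_char by (simp add: all_conj_distrib)

lemma gen_indist: "generate_topology_on S U \<Longrightarrow> (\<forall>V\<in>S. x \<in> V \<longleftrightarrow> y \<in> V) \<Longrightarrow> (x \<in> U \<longleftrightarrow> y \<in> U)"
  by (induction rule: generate_topology_on.induct) auto

lemma T0_char: assumes "B_topology \<tau>"
  shows "t0_space (join_top \<tau>) \<longleftrightarrow> (\<forall>x y. (\<forall>i. sp \<tau> i x y \<and> sp \<tau> i y x) \<longrightarrow> x = y)"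
proof -
  have ts: "topspace (join_top \<tau>) = UNIV"
    unfolding join_top_def using UNIV_levels[OF assms, of tt] by auto
  have L: "levels \<tau> tt \<union> levels \<tau> ff = (\<Union>i. levels \<tau> (bt i))"
    by (auto simp: bt_def split: if_splits)
  show ?thesis
  proof
    assume T: "t0_space (join_top \<tau>)"
    show "\<forall>x y. (\<forall>i. sp \<tau> i x y \<and> sp \<tau> i y x) \<longrightarrow> x = y"
    proof (intro allI impI)
      fix x y assume s: "\<forall>i. sp \<tau> i x y \<and> sp \<tau> i y x"
      show "x = y"
      proof (rule ccontr)
        assume "x \<noteq> y"
        then obtain U where U: "openin (join_top \<tau>) U" "x \<notin> U \<longleftrightarrow> y \<in> U"
          using T ts unfolding t0_space_def by blast
        have g: "generate_topology_on (levels \<tau> tt \<union> levels \<tau> ff) U"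
          using U(1) unfolding join_top_def by (rule openin_topology_generated_by)
        have "\<forall>V\<in>levels \<tau> tt \<union> levels \<tau> ff. x \<in> V \<longleftrightarrow> y \<in> V"
          using s unfolding L sp_def by blast
        from gen_indist[OF g this] U(2) show False by blast
      qed
    qed
  next
    assume S: "\<forall>x y. (\<forall>i. sp \<tau> i x y \<and> sp \<tau> i y x) \<longrightarrow> x = y"
    show "t0_space (join_top \<tau>)" unfolding t0_space_def
    proof (intro ballI impI)
      fix x y :: 'a assume "x \<noteq> y"
      then obtain i where "\<not> (sp \<tau> i x y \<and> sp \<tau> i y x)" using S by blast
      then obtain V where V: "V \<in> levels \<tau> (bt i)" "x \<notin> V \<longleftrightarrow> y \<in> V"
        unfolding sp_def by blast
      have "openin (join_top \<tau>) V" unfolding join_top_def openin_topology_generated_by_iff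
        using V(1) L by (auto intro: generate_topology_on.Basis)
      with V(2) show "\<exists>U. openin (join_top \<tau>) U \<and> (x \<notin> U \<longleftrightarrow> y \<in> U)" by blast
    qed
  qed
qed

theorem mainTheorem18:
  fixes \<tau> :: "('a \<Rightarrow> B4) set"
  assumes "B_topology \<tau>"
  shows "(B_normal \<tau> \<longleftrightarrow>
            normal_space (level_top \<tau> tt) \<and> normal_space (level_top \<tau> ff))
       \<and> (B_T4 \<tau> \<longleftrightarrow>
            t0_space (join_top \<tau>) \<and>
            r0_space (level_top \<tau> tt) \<and> r0_space (level_top \<tau> ff) \<and>
            normal_space (level_top \<tau> tt) \<and> normal_space (level_top \<tau> ff))"
proof -
  have A: "(\<forall>i. P i) \<longleftrightarrow> P True \<and> P False" for P by (metis (full_types))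
  have N: "B_normal \<tau> \<longleftrightarrow> normal_space (level_top \<tau> tt) \<and> normal_space (level_top \<tau> ff)"
    using normal_char[OF assms] A[of "\<lambda>i. normal_space (level_top \<tau> (bt i))"] by simp
  have R: "B_R0 \<tau> \<longleftrightarrow> r0_space (level_top \<tau> tt) \<and> r0_space (level_top \<tau> ff)"
    using R0_char[OF assms, of True] R0_char[OF assms, of False] BR0_char[of \<tau>]
      A[of "\<lambda>i. \<forall>x y. sp \<tau> i x y \<longrightarrow> sp \<tau> i y x"] by simp
  have T: "B_T0 \<tau> \<longleftrightarrow> t0_space (join_top \<tau>)"
    using BT0_char T0_char[OF assms] by simp
  show ?thesis using N R T unfolding B_T4_def B_T1_def by blast
qed

end
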